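(* Let $D_N=\sum_{k=0}^{N}\binom{N}{k}^2 2^k$ denote the $N$-th central Delannoy number. For every non-negative integer $n$, $$v_3(D_{2n+1})=1+v_3(2n+1)+v_3\Big(\binom{2n}{n}\Big),\qquad v_3(D_{2n})=v_3\Big(\binom{2n}{n}\Big).$$
   Context: $v_3(y)$ denotes the $3$-adic valuation of a nonzero integer $y$. Equivalently, $D_N$ is the number of lattice paths from $(0,0)$ to $(N,N)$ using steps $(1,0)$, $(0,1)$, $(1,1)$. *)

theory Defs
  imports "HOL-Computational_Algebra.Primes"
begin

definition delannoy :: "nat \<Rightarrow> nat" where
  "delannoy N = (\<Sum>k = 0..N. (N choose k)^2 * 2^k)"

abbreviation v3 :: "nat \<Rightarrow> nat" where
  "v3 y \<equiv> multiplicity (3::nat) y"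

end

theory Submission
  imports Defs "HOL-Computational_Algebra.Polynomial"
begin

lemma pow_lin: "(monom (1::nat) 1 + monom a 0)^n = (\<Sum>k\<le>n. monom ((n choose k) * a^(n-k)) k)"
  by (simp add: binomial_ring of_nat_monom monom_power mult_monom)

lemma pow_quad: "(monom (1::nat) 2 + monom a 0)^n = (\<Sum>k\<le>n. monom ((n choose k) * a^(n-k)) (2*k))"
  by (simp add: binomial_ring of_nat_monom monom_power mult_monom mult.commute)

lemma side1: "coeff ((monom (1::nat) 1 + monom 1 0)^n * (monom 1 1 + monom 2 0)^n) n = delannoy n"
proof -
  have "coeff ((monom (1::nat) 1 + monom 1 0)^n * (monom 1 1 + monom 2 0)^n) n
     = (\<Sum>i\<le>n. (n choose i) * ((n choose (n-i)) * 2^(n-(n-i))))"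
    unfolding coeff_mult pow_lin coeff_sum by (simp add: coeff_monom)
  also have "\<dots> = (\<Sum>i=0..n. (n choose i)^2 * 2^i)"
    by (rule sum.cong) (auto simp: binomial_symmetric[symmetric] power2_eq_square)
  finally show ?thesis by (simp add: delannoy_def)
qed

lemma coeffQ: "coeff ((monom (1::nat) 2 + monom 2 0)^m) m = (if even m then (m choose (m div 2)) * 2^(m div 2) else 0)"
proof -
  have "coeff ((monom (1::nat) 2 + monom 2 0)^m) m = (\<Sum>k\<le>m. if 2*k = m then (m choose k) * 2^(m-k) else 0)"
    unfolding pow_quad coeff_sum by (simp add: coeff_monom)
  also have "\<dots> = (if even m then (m choose (m div 2)) * 2^(m div 2) else 0)"
  proof (cases "even m")
    case True
    then obtain k0 where m: "m = 2*k0" by blast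
    have "(\<Sum>k\<le>m. if 2*k = m then (m choose k) * 2^(m-k) else 0) = (\<Sum>k\<in>{k0}. (m choose k) * 2^(m-k))"
      by (rule sum.mono_neutral_cong_right) (auto simp: m)
    then show ?thesis using m by simp
  next
    case False
    then show ?thesis by (auto intro!: sum.neutral)
  qed
  finally show ?thesis .
qed

lemma sum_even: "(\<Sum>j\<le>(n::nat). if even j then g j else (0::nat)) = (\<Sum>k\<le>n div 2. g (2*k))"
proof (induction n)
  case 0 then show ?case by simp
next
  case (Suc n)
  show ?case
  proof (cases "even (Suc n)")
    case True
    then have "Suc n div 2 = Suc (n div 2)" by presburger
    moreover have "2 * Suc (n div 2) = Suc n" using True by presburger
    ultimately show ?thesis using Suc True by simp
  next
    case False
    then have "Suc n div 2 = n div 2" by presburger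
    then show ?thesis using Suc False by simp
  qed
qed

definition T :: "nat \<Rightarrow> nat \<Rightarrow> nat" where
  "T n k = (n choose (2*k)) * ((2*k) choose k) * 3^(n-2*k) * 2^k"

lemma delannoy_T: "delannoy n = (\<Sum>k\<le>n div 2. T n k)"
proof -
  have P: "(monom (1::nat) 1 + monom 1 0) * (monom 1 1 + monom 2 0) = monom 3 1 + (monom 1 2 + monom 2 0)"
    by (rule poly_eqI) (simp add: algebra_simps mult_monom)
  have "delannoy n = coeff ((monom 3 1 + (monom 1 2 + monom 2 0))^n) n"
    unfolding P[symmetric] power_mult_distrib side1 ..
  also have "\<dots> = (\<Sum>i\<le>n. (n choose i) * 3^i * coeff ((monom (1::nat) 2 + monom 2 0)^(n-i)) (n-i))"
    unfolding binomial_ring coeff_sum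
    by (intro sum.cong refl) (simp add: of_nat_monom monom_power mult_monom mult.assoc coeff_monom_mult coeff_sum)
  also have "\<dots> = (\<Sum>j\<le>n. (n choose (n-j)) * 3^(n-j) * coeff ((monom (1::nat) 2 + monom 2 0)^j) j)"
    by (rule sum.reindex_bij_witness[of _ "\<lambda>j. n - j" "\<lambda>j. n - j"]) auto
  also have "\<dots> = (\<Sum>j\<le>n. if even j then (n choose (n-j)) * 3^(n-j) * ((j choose (j div 2)) * 2^(j div 2)) else 0)"
    by (intro sum.cong refl) (subst coeffQ, simp)
  also have "\<dots> = (\<Sum>k\<le>n div 2. T n k)"
    unfolding sum_even T_def
    by (intro sum.cong refl) (simp add: binomial_symmetric[symmetric])
  finally show ?thesis .
qed

lemma cbound: assumes "j \<ge> 1" shows "2 * ((2*j) choose j) \<le> 4^j"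
proof -
  obtain i where j: "j = Suc i" using assms by (cases j) auto
  have e: "2*j = Suc (2*i+1)" using j by simp
  have s1: "(2*i+1) choose (Suc i) = (2*i+1) choose i"
    using binomial_symmetric[of i "2*i+1"] by simp
  have c: "(2*j) choose j = 2 * ((2*i+1) choose i)"
    unfolding e j using s1 by simp
  have "((2*i+1) choose i) + ((2*i+1) choose (Suc i)) = (\<Sum>k\<in>{i, Suc i}. (2*i+1) choose k)" by simp
  also have "\<dots> \<le> (\<Sum>k\<le>2*i+1. (2*i+1) choose k)"
    by (rule sum_mono2) auto
  also have "\<dots> = 2^(2*i+1)" by (rule choose_row_sum)
  finally have "2 * ((2*i+1) choose i) \<le> 2^(2*i+1)" using s1 by simp
  then have "2 * ((2*j) choose j) \<le> 2 * 2^(2*i+1)" using c by simp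
  also have "\<dots> = 2^(2*j)" using j by simp
  also have "\<dots> = 4^j" by (simp add: power_mult)
  finally show ?thesis .
qed

lemma pbound: assumes "j \<ge> 1" shows "(2*j+1) * 4^j < 2 * (9::nat)^j"
  using assms
proof (induction j rule: dec_induct)
  case base then show ?case by simp
next
  case (step j)
  have "(2*Suc j+1) * 4^Suc j = 4 * ((2*j+1) * 4^j) + 8 * 4^j" by (simp add: algebra_simps)
  also have "8 * 4^j \<le> 4 * ((2*j+1) * 4^j)" using step(1) by simp
  finally have "(2*Suc j+1) * 4^Suc j \<le> 8 * ((2*j+1) * 4^j)" by simp
  also have "\<dots> < 8 * (2 * 9^j)" using step by simp
  also have "\<dots> \<le> 2 * 9^Suc j" by simp
  finally show ?case .
qed

lemma key_bound: assumes "j \<ge> 1" shows "(2*j+1) * ((2*j) choose j) < 3^(2*j)"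
proof -
  have "2 * ((2*j+1) * ((2*j) choose j)) = (2*j+1) * (2 * ((2*j) choose j))" by simp
  also have "\<dots> \<le> (2*j+1) * 4^j" by (rule mult_left_mono) (use cbound[OF assms] in auto)
  also have "\<dots> < 2 * 9^j" by (rule pbound[OF assms])
  finally show ?thesis by (simp add: power_mult)
qed

lemma v3_mult: "x \<noteq> 0 \<Longrightarrow> y \<noteq> 0 \<Longrightarrow> v3 (x*y) = v3 x + v3 y"
  by (rule prime_elem_multiplicity_mult_distrib) auto

lemma v3_3pow: "v3 (3^n) = n"
  by (rule multiplicity_same_power) auto

lemma v3_2pow: "v3 (2^n) = 0"
proof (rule not_dvd_imp_multiplicity_0)
  have p: "prime (3::nat)" by auto
  show "\<not> 3 dvd (2::nat)^n"
  proof
    assume "3 dvd (2::nat)^n"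
    then have "3 dvd (2::nat)" using prime_dvd_power[OF p] by blast
    then show False by simp
  qed
qed

lemma v3_lt: assumes "x \<noteq> 0" "x < 3^N" shows "v3 x < N"
proof -
  have "3^(v3 x) \<le> x" using multiplicity_dvd[of 3 x] assms(1) by (simp add: dvd_imp_le)
  then have "(3::nat)^(v3 x) < 3^N" using assms(2) by linarith
  then show ?thesis by (simp add: power_less_imp_less_exp)
qed

lemma val_sum:
  assumes "finite A" "a \<in> A" "f a \<noteq> 0" "v3 (f a) = e" "\<And>k. k \<in> A - {a} \<Longrightarrow> 3^(Suc e) dvd f k"
  shows "v3 (sum f A) = e"
proof -
  have s: "sum f A = f a + sum f (A - {a})" using assms(1,2) by (simp add: sum.remove)
  have r: "3^(Suc e) dvd sum f (A - {a})" using assms(5) by (intro dvd_sum) auto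
  have d1: "3^e dvd f a" using multiplicity_dvd[of 3 "f a"] assms(4) by simp
  have nd: "\<not> 3^(Suc e) dvd f a"
  proof
    assume "3^(Suc e) dvd f a"
    then have "Suc e \<le> v3 (f a)" using assms(3) by (intro multiplicity_geI) auto
    then show False using assms(4) by simp
  qed
  show ?thesis unfolding s
  proof (rule multiplicity_eqI)
    show "3^e dvd f a + sum f (A - {a})" using d1 r by (meson dvd_add le_imp_power_dvd le_SucI order_refl dvd_trans)
    show "\<not> 3^Suc e dvd f a + sum f (A - {a})"
      using nd r by (metis dvd_add_left_iff add.commute)
  qed
qed

lemma idE: "((2*(k+j)) choose (2*k)) * ((2*k) choose k) * ((2*j) choose j) = ((2*(k+j)) choose (k+j)) * ((k+j) choose k)^2"
proof -
  have "real (((2*(k+j)) choose (2*k)) * ((2*k) choose k) * ((2*j) choose j)) = real (((2*(k+j)) choose (k+j)) * ((k+j) choose k)^2)"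
    by (simp add: binomial_fact field_simps power2_eq_square)
  then show ?thesis by (simp only: of_nat_eq_iff)
qed

lemma idO: "((2*(k+j)+1) choose (2*k)) * ((2*k) choose k) * ((2*j+1) * ((2*j) choose j)) = (2*(k+j)+1) * ((2*(k+j)) choose (k+j)) * ((k+j) choose k)^2"
proof -
  have a: "(2*j+1) * ((2*(k+j)+1) choose (2*k)) = (2*(k+j)+1) * ((2*(k+j)) choose (2*k))"
    using binomial_absorb_comp[of "2*(k+j)+1" "2*k"] by simp
  have "((2*(k+j)+1) choose (2*k)) * ((2*k) choose k) * ((2*j+1) * ((2*j) choose j))
      = ((2*j+1) * ((2*(k+j)+1) choose (2*k))) * ((2*k) choose k) * ((2*j) choose j)" by (simp only: ac_simps)
  also have "\<dots> = (2*(k+j)+1) * (((2*(k+j)) choose (2*k)) * ((2*k) choose k) * ((2*j) choose j))"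
    unfolding a by (simp add: ac_simps)
  also have "\<dots> = (2*(k+j)+1) * ((2*(k+j)) choose (k+j)) * ((k+j) choose k)^2"
    unfolding idE by (simp add: ac_simps)
  finally show ?thesis .
qed

lemma bound_dvd:
  assumes "x * c = y" "x \<noteq> 0" "c \<noteq> 0" "v3 c < d" "3^(e+d) dvd y"
  shows "3^(Suc e) dvd x"
proof -
  have "y \<noteq> 0" using assms by auto
  then have "e + d \<le> v3 y" using assms(5) by (intro multiplicity_geI) auto
  moreover have "v3 y = v3 x + v3 c" using assms(1-3) v3_mult by blast
  ultimately have "Suc e \<le> v3 x" using assms(4) by linarith
  then show ?thesis by (rule multiplicity_dvd')
qed

lemma even_case: "v3 (delannoy (2*n)) = v3 ((2*n) choose n)"
proof -
  let ?e = "v3 ((2*n) choose n)"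
  have D: "delannoy (2*n) = (\<Sum>k\<le>n. T (2*n) k)" using delannoy_T[of "2*n"] by simp
  have Tn: "T (2*n) n = ((2*n) choose n) * 2^n" by (simp add: T_def)
  show ?thesis unfolding D
  proof (rule val_sum[where a=n])
    show "T (2*n) n \<noteq> 0" unfolding Tn by simp
    show "v3 (T (2*n) n) = ?e" unfolding Tn by (subst v3_mult) (auto simp: v3_2pow)
    fix k assume "k \<in> {..n} - {n}"
    then have kn: "k < n" by auto
    define j where "j = n - k"
    have j1: "j \<ge> 1" and nkj: "n = k + j" using kn by (auto simp: j_def)
    have TE: "T (2*n) k = ((2*(k+j)) choose (2*k)) * ((2*k) choose k) * 3^(2*j) * 2^k"
      unfolding T_def nkj by (simp add: algebra_simps)
    show "3^(Suc ?e) dvd T (2*n) k"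
    proof (rule bound_dvd)
      show "T (2*n) k * ((2*j) choose j) = ((2*n) choose n) * ((n choose k)^2 * 3^(2*j) * 2^k)"
      proof -
        have "T (2*n) k * ((2*j) choose j) = (((2*(k+j)) choose (2*k)) * ((2*k) choose k) * ((2*j) choose j)) * (3^(2*j) * 2^k)"
          unfolding TE by (simp only: ac_simps)
        also have "\<dots> = (((2*(k+j)) choose (k+j)) * ((k+j) choose k)^2) * (3^(2*j) * 2^k)"
          by (simp only: idE)
        also have "\<dots> = ((2*n) choose n) * ((n choose k)^2 * 3^(2*j) * 2^k)"
          unfolding nkj by (simp only: ac_simps)
        finally show ?thesis .
      qed
      show "T (2*n) k \<noteq> 0" unfolding TE using kn by (simp add: nkj)
      show "(2*j choose j) \<noteq> 0" by simp
      have "(2*j choose j) < 3^(2*j)" 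
      proof -
        have "(2*j choose j) \<le> (2*j+1) * (2*j choose j)" by simp
        then show ?thesis using key_bound[OF j1] by linarith
      qed
      then show "v3 (2*j choose j) < 2*j" by (intro v3_lt) auto
      show "3^(?e + 2*j) dvd ((2*n) choose n) * ((n choose k)^2 * 3^(2*j) * 2^k)"
        unfolding power_add by (intro mult_dvd_mono multiplicity_dvd) simp
    qed
  qed simp_all
qed

lemma odd_case: "v3 (delannoy (2*n+1)) = 1 + v3 (2*n+1) + v3 ((2*n) choose n)"
proof -
  let ?e = "1 + v3 (2*n+1) + v3 ((2*n) choose n)"
  have D: "delannoy (2*n+1) = (\<Sum>k\<le>n. T (2*n+1) k)" using delannoy_T[of "2*n+1"] by simp
  have c1: "(2*n+1) choose (2*n) = 2*n+1"
    using binomial_symmetric[of "2*n" "2*n+1"] by simp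
  have Tn: "T (2*n+1) n = (2*n+1) * (((2*n) choose n) * (3 * 2^n))" by (simp add: T_def c1 algebra_simps)
  show ?thesis unfolding D
  proof (rule val_sum[where a=n])
    show "T (2*n+1) n \<noteq> 0" unfolding Tn by simp
    show "v3 (T (2*n+1) n) = ?e"
    proof -
      have 3: "v3 3 = 1" using v3_3pow[of 1] by simp
      have "v3 ((2*n+1) * (((2*n) choose n) * (3 * 2^n))) = v3 (2*n+1) + (v3 ((2*n) choose n) + (v3 3 + v3 (2^n)))"
        by (subst v3_mult, simp, simp)+ (rule refl)
      then have X: "v3 ((2*n+1) * (((2*n) choose n) * (3 * 2^n))) = v3 (2*n+1) + (v3 ((2*n) choose n) + 1)"
        using 3 by (simp only: v3_2pow add_0_right)
      show ?thesis unfolding Tn X by simp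
    qed
    fix k assume "k \<in> {..n} - {n}"
    then have kn: "k < n" by auto
    define j where "j = n - k"
    have j1: "j \<ge> 1" and nkj: "n = k + j" using kn by (auto simp: j_def)
    have TE: "T (2*n+1) k = ((2*(k+j)+1) choose (2*k)) * ((2*k) choose k) * 3^(2*j+1) * 2^k"
      unfolding T_def nkj by (simp add: algebra_simps)
    show "3^(Suc ?e) dvd T (2*n+1) k"
    proof (rule bound_dvd)
      show "T (2*n+1) k * ((2*j+1) * ((2*j) choose j)) = ((2*n+1) * ((2*n) choose n) * 3) * ((n choose k)^2 * 3^(2*j) * 2^k)"
      proof -
        have "T (2*n+1) k * ((2*j+1) * ((2*j) choose j)) = (((2*(k+j)+1) choose (2*k)) * ((2*k) choose k) * ((2*j+1) * ((2*j) choose j))) * (3^(2*j+1) * 2^k)"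
          unfolding TE by (simp only: ac_simps)
        also have "\<dots> = ((2*(k+j)+1) * ((2*(k+j)) choose (k+j)) * ((k+j) choose k)^2) * (3^(2*j+1) * 2^k)"
          by (simp only: idO)
        also have "\<dots> = ((2*n+1) * ((2*n) choose n) * 3) * ((n choose k)^2 * 3^(2*j) * 2^k)"
          unfolding nkj power_add by (simp only: ac_simps power_one_right)
        finally show ?thesis .
      qed
      show "T (2*n+1) k \<noteq> 0" unfolding TE using kn by (simp add: nkj)
      show "(2*j+1) * (2*j choose j) \<noteq> 0" by simp
      show "v3 ((2*j+1) * (2*j choose j)) < 2*j" using key_bound[OF j1] by (intro v3_lt) auto
      have d1: "3^(v3 (2*n+1) + v3 ((2*n) choose n) + 1) dvd (2*n+1) * ((2*n) choose n) * 3"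
        unfolding power_add by (intro mult_dvd_mono multiplicity_dvd) simp
      have "(3::nat)^(?e + 2*j) = 3^(v3 (2*n+1) + v3 ((2*n) choose n) + 1) * 3^(2*j)"
        by (simp add: power_add)
      then show "3^(?e + 2*j) dvd ((2*n+1) * ((2*n) choose n) * 3) * ((n choose k)^2 * 3^(2*j) * 2^k)"
        using d1 by (simp add: mult_dvd_mono)
    qed
  qed simp_all
qed

theorem theorem5:
  fixes n :: nat
  shows "v3 (delannoy (2*n+1)) = 1 + v3 (2*n+1) + v3 ((2*n) choose n) \<and>
         v3 (delannoy (2*n)) = v3 ((2*n) choose n)"
  using odd_case even_case by blast

end
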